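(* Let $p$ be an odd prime and let $g$, $g'$ both be of the form \[F(x)+G\!\left(\tfrac1x\right)+H\!\left(\tfrac1{x-1}\right)+\sum_{j=4}^{r+1}J_j\!\left(\tfrac{1}{x-\theta_j}\right)\] described below, with the same pole orders, where $d_1>d_2>d_3$ and $\{d_1,d_2,d_3\}\cap\{d_4,\dots,d_{r+1}\}=\emptyset$. If $(M,\lambda,h)$ transforms $C_g$ into $C_{g'}$, then $M(x)=x$ and $h$ is a constant in $\mathbb{F}_p$; i.e., up to composition with $(x,y)\mapsto(x,y+c)$, $c\in\mathbb{F}_p$, every isomorphism preserving this form is $(x,y)\mapsto(x,\lambda y)$ for some $\lambda\in\mathbb{F}_p^\times$ (and then $g'=g/\lambda$ up to the relabeling of the $\theta_j$).
   Context: Form: $F(x)=\sum_{i=1}^{d_1}a_ix^i$, $G(x)=\sum_{i=1}^{d_2}b_ix^i$, $H(x)=\sum_{i=1}^{d_3}c_ix^i$, $J_j(x)=\sum_{i=1}^{d_j}e_{ij}x^i$ with all $d_i$ not divisible by $p$, $a_i=b_i=c_i=e_{ij}=0$ whenever $p\mid i$, $a_{d_1},b_{d_2},c_{d_3},e_{d_jj}\ne0$, and $\theta_4,\dots,\theta_{r+1}\in\overline{\mathbb{F}}_p\setminus\{0,1\}$ distinct. For $f\in\overline{\mathbb{F}}_p(x)$, $C_f$ is the curve $y^p-y=f(x)$. For a Möbius transformation $M(x)=\frac{\alpha x+\beta}{\gamma x+\delta}$ ($\alpha\delta-\beta\gamma\ne0$), $\lambda\in\mathbb{F}_p^\times$,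 $h\in\overline{\mathbb{F}}_p(x)$, we say $(M,\lambda,h)$ transforms $C_f$ into $C_{f'}$ if $f(M(x))=\lambda f'(x)+h(x)^p-h(x)$. *)

theory Defs
  imports "HOL-Computational_Algebra.Computational_Algebra"
begin

text \<open>Rational functions over a field k are modelled as k poly fract.\<close>

definition rconst :: "'a::field \<Rightarrow> 'a poly fract" where
  "rconst c = Fract [:c:] 1"

definition rX :: "'a::field poly fract" where
  "rX = Fract [:0, 1:] 1"

definition peval :: "'a::field poly \<Rightarrow> 'a poly fract \<Rightarrow> 'a poly fract" where
  "peval q z = poly (map_poly rconst q) z"

definition rcomp :: "'a::field_gcd poly fract \<Rightarrow> 'a poly fract \<Rightarrow> 'a poly fract" where
  "rcomp f m = (case quot_of_fract f of (a, b) \<Rightarrow> peval a m / peval b m)"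

definition mobius :: "'a::field \<Rightarrow> 'a \<Rightarrow> 'a \<Rightarrow> 'a \<Rightarrow> 'a poly fract" where
  "mobius \<alpha> \<beta> \<gamma> \<delta> = (rconst \<alpha> * rX + rconst \<beta>) / (rconst \<gamma> * rX + rconst \<delta>)"

definition is_alg_closure_Fp :: "nat \<Rightarrow> 'a::field itself \<Rightarrow> bool" where
  "is_alg_closure_Fp p _ \<longleftrightarrow> CHAR('a) = p \<and>
     (\<forall>q::'a poly. degree q > 0 \<longrightarrow> (\<exists>x. poly q x = 0)) \<and>
     (\<forall>x::'a. \<exists>n>0. x ^ (p ^ n) = x)"

definition good_poly :: "nat \<Rightarrow> nat \<Rightarrow> 'a::field poly \<Rightarrow> bool" where
  "good_poly p d q \<longleftrightarrow> degree q = d \<and> coeff q d \<noteq> 0 \<and> coeff q 0 = 0 \<and>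
     \<not> p dvd d \<and> (\<forall>i. p dvd i \<longrightarrow> coeff q i = 0)"

definition form_fun :: "nat \<Rightarrow> 'a::field poly \<Rightarrow> 'a poly \<Rightarrow> 'a poly \<Rightarrow> (nat \<Rightarrow> 'a poly)
     \<Rightarrow> (nat \<Rightarrow> 'a) \<Rightarrow> 'a poly fract" where
  "form_fun r F G H J \<theta> =
     peval F rX + peval G (1 / rX) + peval H (1 / (rX - 1)) +
     (\<Sum>j\<in>{4..r+1}. peval (J j) (1 / (rX - rconst (\<theta> j))))"

definition good_form :: "nat \<Rightarrow> nat \<Rightarrow> (nat \<Rightarrow> nat) \<Rightarrow> 'a::field poly \<Rightarrow> 'a poly \<Rightarrow> 'a poly
     \<Rightarrow> (nat \<Rightarrow> 'a poly) \<Rightarrow> (nat \<Rightarrow> 'a) \<Rightarrow> bool" where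
  "good_form p r d F G H J \<theta> \<longleftrightarrow>
     good_poly p (d 1) F \<and> good_poly p (d 2) G \<and> good_poly p (d 3) H \<and>
     (\<forall>j\<in>{4..r+1}. good_poly p (d j) (J j)) \<and>
     (\<forall>j\<in>{4..r+1}. \<theta> j \<noteq> 0 \<and> \<theta> j \<noteq> 1) \<and> inj_on \<theta> {4..r+1}"

definition transforms :: "nat \<Rightarrow> 'a::field_gcd \<Rightarrow> 'a \<Rightarrow> 'a \<Rightarrow> 'a \<Rightarrow> 'a \<Rightarrow> 'a poly fract
     \<Rightarrow> 'a poly fract \<Rightarrow> 'a poly fract \<Rightarrow> bool" where
  "transforms p \<alpha> \<beta> \<gamma> \<delta> lam h f f' \<longleftrightarrow>
     \<alpha> * \<delta> - \<beta> * \<gamma> \<noteq> 0 \<and> lam ^ p = lam \<and> lam \<noteq> 0 \<and>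
     rcomp f (mobius \<alpha> \<beta> \<gamma> \<delta>) = rconst lam * f' + h ^ p - h"

end

theory Submission
  imports Defs
begin

definition ordinf :: "'a::field_gcd poly fract \<Rightarrow> int" where
  "ordinf f = int (degree (fst (quot_of_fract f))) - int (degree (snd (quot_of_fract f)))"

definition bnd :: "int \<Rightarrow> 'a::field_gcd poly fract \<Rightarrow> bool" where
  "bnd n f \<longleftrightarrow> f = 0 \<or> ordinf f \<le> n"

definition exact :: "int \<Rightarrow> 'a::field_gcd poly fract \<Rightarrow> bool" where
  "exact n f \<longleftrightarrow> f \<noteq> 0 \<and> ordinf f = n"

lemma ordinf_Fract:
  fixes a b :: "'a::field_gcd poly"
  assumes "a \<noteq> 0" "b \<noteq> 0"
  shows "ordinf (Fract a b) = int (degree a) - int (degree b)"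
proof -
  obtain a' b' where q: "quot_of_fract (Fract a b) = (a', b')" by (cases "quot_of_fract (Fract a b)")
  have nz: "Fract a b \<noteq> 0" using assms by (simp add: Zero_fract_def eq_fract)
  have b': "b' \<noteq> 0" using snd_quot_of_fract_nonzero[of "Fract a b"] q by simp
  have a': "a' \<noteq> 0" using fst_quot_of_fract_eq_0_iff[of "Fract a b"] q nz by simp
  have "Fract a' b' = Fract a b" using Fract_quot_of_fract[of "Fract a b"] q by simp
  then have "a' * b = a * b'" using assms b' by (simp add: eq_fract)
  then have "degree a' + degree b = degree a + degree b'"
    using assms a' b' by (metis degree_mult_eq)
  then show ?thesis unfolding ordinf_def q by simp
qed

lemma Fract_eq0: "b \<noteq> 0 \<Longrightarrow> Fract a b = 0 \<longleftrightarrow> a = 0"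
  by (simp add: Zero_fract_def eq_fract)

lemma bnd_Fract:
  fixes a b :: "'a::field_gcd poly"
  assumes "b \<noteq> 0"
  shows "bnd n (Fract a b) \<longleftrightarrow> a = 0 \<or> int (degree a) \<le> int (degree b) + n"
  using assms by (cases "a = 0") (auto simp: bnd_def ordinf_Fract Fract_eq0)

lemma exact_Fract:
  fixes a b :: "'a::field_gcd poly"
  assumes "b \<noteq> 0" "a \<noteq> 0"
  shows "exact n (Fract a b) \<longleftrightarrow> int (degree a) = int (degree b) + n"
  using assms by (auto simp: exact_def ordinf_Fract Fract_eq0)

lemma bnd_0 [simp]: "bnd n 0" by (simp add: bnd_def)

lemma bnd_mono: "bnd n f \<Longrightarrow> n \<le> m \<Longrightarrow> bnd m f"
  by (auto simp: bnd_def)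

lemma exact_not_bnd: "exact n f \<Longrightarrow> m < n \<Longrightarrow> \<not> bnd m f"
  by (auto simp: bnd_def exact_def)

lemma exact_bnd: "exact n f \<Longrightarrow> n \<le> m \<Longrightarrow> bnd m f"
  by (auto simp: bnd_def exact_def)

lemma exact_nz: "exact n f \<Longrightarrow> f \<noteq> 0" by (simp add: exact_def)

lemma exact_unique: "exact n f \<Longrightarrow> exact m f \<Longrightarrow> n = m" by (simp add: exact_def)

lemma bnd_or_exact: "bnd n f \<or> (\<exists>m>n. exact m f)"
  by (auto simp: bnd_def exact_def)

lemma bnd_add:
  fixes f g :: "'a::field_gcd poly fract"
  assumes "bnd n f" "bnd n g" shows "bnd n (f + g)"
proof -
  obtain a b where f: "f = Fract a b" "b \<noteq> 0" by (cases f)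
  obtain c e where g: "g = Fract c e" "e \<noteq> 0" by (cases g)
  have A: "a = 0 \<or> int (degree a) \<le> int (degree b) + n" using assms(1) f bnd_Fract by blast
  have C: "c = 0 \<or> int (degree c) \<le> int (degree e) + n" using assms(2) g bnd_Fract by blast
  have "a * e + c * b = 0 \<or> int (degree (a * e + c * b)) \<le> int (degree (b * e)) + n"
  proof (cases "a * e + c * b = 0")
    case False
    have "degree (a * e + c * b) \<le> max (degree (a * e)) (degree (c * b))" by (rule degree_add_le_max)
    moreover have "a = 0 \<or> int (degree (a * e)) \<le> int (degree (b * e)) + n"
      using A f g by (cases "a = 0") (auto simp: degree_mult_eq)
    moreover have "c = 0 \<or> int (degree (c * b)) \<le> int (degree (b * e)) + n"
      using C f g by (cases "c = 0") (auto simp: degree_mult_eq)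
    ultimately show ?thesis using False by (cases "a = 0"; cases "c = 0"; auto)
  qed simp
  then show ?thesis using f g by (simp add: bnd_Fract)
qed

lemma exact_add:
  fixes f g :: "'a::field_gcd poly fract"
  assumes "exact n f" "bnd m g" "m < n" shows "exact n (f + g)"
proof (cases "g = 0")
  case True then show ?thesis using assms by simp
next
  case False
  obtain a b where f: "f = Fract a b" "b \<noteq> 0" by (cases f)
  obtain c e where g: "g = Fract c e" "e \<noteq> 0" by (cases g)
  have a0: "a \<noteq> 0" using assms(1) f by (auto simp: exact_def Fract_eq0)
  have c0: "c \<noteq> 0" using False g by (auto simp: Fract_eq0)
  have A: "int (degree a) = int (degree b) + n" using assms(1) f a0 exact_Fract by blast
  have C: "int (degree c) \<le> int (degree e) + m" using assms(2) g c0 bnd_Fract by blast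
  have d1: "int (degree (a * e)) = int (degree (b * e)) + n" using A f g a0 by (simp add: degree_mult_eq)
  have d2: "int (degree (c * b)) \<le> int (degree (b * e)) + m" using C f g c0 by (simp add: degree_mult_eq)
  have lt: "degree (c * b) < degree (a * e)" using d1 d2 assms(3) by linarith
  then have deq: "degree (a * e + c * b) = degree (a * e)" by (rule degree_add_eq_left)
  have nz: "a * e + c * b \<noteq> 0"
  proof
    assume "a * e + c * b = 0"
    then have "a * e = - (c * b)" by (simp add: eq_neg_iff_add_eq_0)
    then have "degree (a * e) = degree (c * b)" by simp
    then show False using lt by simp
  qed
  show ?thesis using f g nz d1 deq by (simp add: exact_Fract)
qed

lemma bnd_mult:
  fixes f g :: "'a::field_gcd poly fract"
  assumes "bnd n f" "bnd m g" shows "bnd (n + m) (f * g)"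
proof -
  obtain a b where f: "f = Fract a b" "b \<noteq> 0" by (cases f)
  obtain c e where g: "g = Fract c e" "e \<noteq> 0" by (cases g)
  have A: "a = 0 \<or> int (degree a) \<le> int (degree b) + n" using assms(1) f bnd_Fract by blast
  have C: "c = 0 \<or> int (degree c) \<le> int (degree e) + m" using assms(2) g bnd_Fract by blast
  show ?thesis using f g A C by (cases "a = 0"; cases "c = 0") (auto simp: bnd_Fract degree_mult_eq)
qed

lemma exact_mult:
  fixes f g :: "'a::field_gcd poly fract"
  assumes "exact n f" "exact m g" shows "exact (n + m) (f * g)"
proof -
  obtain a b where f: "f = Fract a b" "b \<noteq> 0" by (cases f)
  obtain c e where g: "g = Fract c e" "e \<noteq> 0" by (cases g)
  have a0: "a \<noteq> 0" using assms(1) f by (auto simp: exact_def Fract_eq0)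
  have c0: "c \<noteq> 0" using assms(2) g by (auto simp: exact_def Fract_eq0)
  have A: "int (degree a) = int (degree b) + n" using assms(1) f a0 exact_Fract by blast
  have C: "int (degree c) = int (degree e) + m" using assms(2) g c0 exact_Fract by blast
  show ?thesis using f g A C a0 c0 by (auto simp: exact_Fract degree_mult_eq)
qed

lemma exact_inverse:
  fixes f :: "'a::field_gcd poly fract"
  assumes "exact n f" shows "exact (- n) (inverse f)"
proof -
  obtain a b where f: "f = Fract a b" "b \<noteq> 0" by (cases f)
  have a0: "a \<noteq> 0" using assms(1) f by (auto simp: exact_def Fract_eq0)
  have A: "int (degree a) = int (degree b) + n" using assms(1) f a0 exact_Fract by blast
  show ?thesis using f A a0 by (auto simp: exact_Fract)
qed

lemma exact_divide:
  fixes f g :: "'a::field_gcd poly fract"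
  assumes "exact n f" "exact m g" shows "exact (n - m) (f / g)"
  using exact_mult[OF assms(1) exact_inverse[OF assms(2)]] by (simp add: divide_inverse)

lemma bnd_uminus: "bnd n f \<Longrightarrow> bnd n (- f)"
  by (cases f) (auto simp: bnd_Fract)

lemma exact_uminus: "exact n f \<Longrightarrow> exact n (- f)"
  by (cases f) (auto simp: Fract_eq0 exact_def ordinf_Fract)

lemma bnd_diff: "bnd n f \<Longrightarrow> bnd n g \<Longrightarrow> bnd n (f - g)"
  using bnd_add[of n f "- g"] bnd_uminus[of n g] by simp

lemma exact_diff: "exact n f \<Longrightarrow> bnd m g \<Longrightarrow> m < n \<Longrightarrow> exact n (f - g)"
  using exact_add[of n f m "- g"] bnd_uminus[of m g] by simp

lemma exact_add2: "bnd m f \<Longrightarrow> exact n g \<Longrightarrow> m < n \<Longrightarrow> exact n (f + g)"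
  using exact_add[of n g m f] by (simp add: add.commute)

lemma bnd_power: "bnd n f \<Longrightarrow> n \<le> 0 \<Longrightarrow> bnd (int k * n) (f ^ k)"
proof (induction k)
  case 0 then show ?case by (simp add: bnd_def ordinf_def)
next
  case (Suc k)
  have "bnd (n + int k * n) (f * f ^ k)" using Suc bnd_mult by blast
  then show ?case by (simp add: algebra_simps)
qed

lemma exact_power: "exact n f \<Longrightarrow> exact (int k * n) (f ^ k)"
proof (induction k)
  case 0 then show ?case by (simp add: exact_def ordinf_def)
next
  case (Suc k)
  have "exact (n + int k * n) (f * f ^ k)" using Suc exact_mult by blast
  then show ?case by (simp add: algebra_simps)
qed

lemma bnd_sum: "finite A \<Longrightarrow> (\<And>i. i \<in> A \<Longrightarrow> bnd n (f i)) \<Longrightarrow> bnd n (\<Sum>i\<in>A. f i)"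
  by (induction A rule: finite_induct) (auto intro: bnd_add)


lemma rconst_0 [simp]: "rconst 0 = 0" by (simp add: rconst_def Zero_fract_def)
lemma rconst_1 [simp]: "rconst 1 = 1" by (simp add: rconst_def One_fract_def one_pCons[symmetric])
lemma rconst_add: "rconst (a + b) = rconst a + rconst b" by (simp add: rconst_def)
lemma rconst_mult: "rconst (a * b) = rconst a * rconst b" by (simp add: rconst_def mult.commute)
lemma rconst_uminus: "rconst (- a) = - rconst a" by (simp add: rconst_def)
lemma rconst_diff: "rconst (a - b) = rconst a - rconst b" by (simp add: rconst_def)
lemma rconst_power: "rconst (a ^ n) = rconst a ^ n"
  by (induction n) (simp_all add: rconst_mult)
lemma rconst_eq0 [simp]: "rconst a = 0 \<longleftrightarrow> a = 0" by (simp add: rconst_def Fract_eq0)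
lemma rconst_inj: "rconst a = rconst b \<longleftrightarrow> a = b"
  using rconst_eq0[of "a - b"] by (simp add: rconst_diff)

lemma exact_rconst: "c \<noteq> 0 \<Longrightarrow> exact 0 (rconst (c::'a::field_gcd))"
  by (simp add: rconst_def exact_Fract)
lemma bnd_rconst: "bnd 0 (rconst (c::'a::field_gcd))"
  by (simp add: rconst_def bnd_Fract)
lemma exact_rX: "exact 1 (rX :: 'a::field_gcd poly fract)"
  by (simp add: rX_def exact_Fract)

lemma Fract_poly_exact: "q \<noteq> 0 \<Longrightarrow> exact (int (degree q)) (Fract (q::'a::field_gcd poly) 1)"
  by (simp add: exact_Fract)
lemma Fract_poly_small: "bnd (-1) (Fract (q::'a::field_gcd poly) 1) \<Longrightarrow> q = 0"
  by (simp add: bnd_Fract)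

lemma peval_0 [simp]: "peval 0 z = 0" by (simp add: peval_def)
lemma peval_pCons: "peval (pCons a q) z = rconst a + z * peval q z"
  by (simp add: peval_def map_poly_pCons)
lemma peval_const [simp]: "peval [:a:] z = rconst a"
  by (simp add: peval_pCons)

lemma peval_add: "peval (p + q) z = peval p z + peval q z"
proof (induction p arbitrary: q rule: pCons_induct)
  case 0 then show ?case by simp
next
  case (pCons a p)
  show ?case
  proof (cases q)
    case (pCons b q')
    then show ?thesis using pCons.IH[of q'] by (simp add: peval_pCons rconst_add algebra_simps)
  qed
qed

lemma peval_smult: "peval (smult a q) z = rconst a * peval q z"
  by (induction q) (simp_all add: peval_pCons rconst_mult algebra_simps)

lemma peval_mult: "peval (p * q) z = peval p z * peval q z"
proof (induction p)
  case 0 then show ?case by simp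
next
  case (pCons a p)
  have "peval (pCons a p * q) z = peval (smult a q) z + peval (pCons 0 (p * q)) z"
    by (simp add: peval_add)
  then show ?case using pCons by (simp add: peval_smult peval_pCons algebra_simps)
qed

lemma peval_uminus: "peval (- p) z = - peval p z"
  using peval_add[of p "- p" z] by (simp add: eq_neg_iff_add_eq_0 add.commute)

lemma peval_diff: "peval (p - q) z = peval p z - peval q z"
  using peval_add[of p "- q" z] peval_uminus[of q z] by simp

lemma peval_1 [simp]: "peval 1 z = 1"
  using peval_const[of 1 z] by (simp add: one_pCons[symmetric])

lemma peval_power: "peval (p ^ n) z = peval p z ^ n"
  by (induction n) (simp_all add: peval_mult)

lemma peval_rX: "peval q rX = Fract q 1"
proof (induction q)
  case 0 then show ?case by (simp add: Zero_fract_def)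
next
  case (pCons a q)
  have "pCons a q = [:a:] + [:0, 1:] * q" by simp
  then show ?case using pCons by (simp add: peval_pCons rconst_def rX_def)
qed

lemma peval_X: "peval [:0, 1:] z = z" by (simp add: peval_pCons)

definition inj_sub :: "'a::field_gcd poly fract \<Rightarrow> bool" where
  "inj_sub m \<longleftrightarrow> (\<forall>b. b \<noteq> 0 \<longrightarrow> peval b m \<noteq> 0)"

lemma rcomp_Fract:
  fixes a b :: "'a::field_gcd poly"
  assumes m: "inj_sub m" and b: "b \<noteq> 0"
  shows "rcomp (Fract a b) m = peval a m / peval b m"
proof -
  obtain a' b' where q: "quot_of_fract (Fract a b) = (a', b')" by (cases "quot_of_fract (Fract a b)")
  have b': "b' \<noteq> 0" using snd_quot_of_fract_nonzero[of "Fract a b"] q by simp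
  have "Fract a' b' = Fract a b" using Fract_quot_of_fract[of "Fract a b"] q by simp
  then have e: "a' * b = a * b'" using b b' by (simp add: eq_fract)
  have "peval a' m * peval b m = peval a m * peval b' m"
    using arg_cong[OF e, of "\<lambda>x. peval x m"] by (simp add: peval_mult)
  moreover have "peval b m \<noteq> 0" "peval b' m \<noteq> 0" using m b b' by (auto simp: inj_sub_def)
  ultimately have "peval a' m / peval b' m = peval a m / peval b m"
    by (simp add: field_simps)
  then show ?thesis by (simp add: rcomp_def q)
qed

lemma rcomp_add:
  assumes m: "inj_sub m" shows "rcomp (f + g) m = rcomp f m + rcomp g m"
proof -
  obtain a b where f: "f = Fract a b" "b \<noteq> 0" by (cases f)
  obtain c e where g: "g = Fract c e" "e \<noteq> 0" by (cases g)
  have "peval b m \<noteq> 0" "peval e m \<noteq> 0" using m f g by (auto simp: inj_sub_def)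
  then show ?thesis using f g m
    by (simp add: rcomp_Fract peval_add peval_mult field_simps)
qed

lemma rcomp_mult:
  assumes m: "inj_sub m" shows "rcomp (f * g) m = rcomp f m * rcomp g m"
proof -
  obtain a b where f: "f = Fract a b" "b \<noteq> 0" by (cases f)
  obtain c e where g: "g = Fract c e" "e \<noteq> 0" by (cases g)
  have "peval b m \<noteq> 0" "peval e m \<noteq> 0" using m f g by (auto simp: inj_sub_def)
  then show ?thesis using f g m
    by (simp add: rcomp_Fract peval_add peval_mult field_simps)
qed

lemma rcomp_uminus:
  assumes m: "inj_sub m" shows "rcomp (- f) m = - rcomp f m"
proof -
  obtain a b where f: "f = Fract a b" "b \<noteq> 0" by (cases f)
  then show ?thesis using f m by (simp add: rcomp_Fract peval_uminus)
qed

lemma rcomp_diff: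
  assumes m: "inj_sub m" shows "rcomp (f - g) m = rcomp f m - rcomp g m"
  using rcomp_add[OF m, of f "- g"] rcomp_uminus[OF m, of g] by simp

lemma rcomp_inverse:
  assumes m: "inj_sub m" shows "rcomp (inverse f) m = inverse (rcomp f m)"
proof -
  obtain a b where f: "f = Fract a b" "b \<noteq> 0" by (cases f)
  show ?thesis
  proof (cases "a = 0")
    case True
    have "rcomp (Fract 0 1) m = peval 0 m / peval 1 m" by (rule rcomp_Fract[OF m]) simp
    then have "rcomp 0 m = 0" by (simp add: Zero_fract_def)
    then show ?thesis using f True by (simp add: fract_collapse)
  next
    case False then show ?thesis using f m by (simp add: rcomp_Fract)
  qed
qed

lemma rcomp_divide:
  assumes m: "inj_sub m" shows "rcomp (f / g) m = rcomp f m / rcomp g m"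
  using rcomp_mult[OF m] rcomp_inverse[OF m] by (simp add: divide_inverse)

lemma rcomp_power:
  assumes m: "inj_sub m" shows "rcomp (f ^ n) m = rcomp f m ^ n"
proof (induction n)
  case 0
  have "rcomp 1 m = 1" using rcomp_Fract[OF m, of 1 1] by (simp add: One_fract_def[symmetric])
  then show ?case by simp
next
  case (Suc n) then show ?case by (simp add: rcomp_mult[OF m])
qed

lemma rcomp_rconst:
  assumes m: "inj_sub m" shows "rcomp (rconst c) m = rconst c"
proof -
  have "rcomp (Fract [:c:] 1) m = peval [:c:] m / peval 1 m" by (rule rcomp_Fract[OF m]) simp
  then show ?thesis by (simp add: rconst_def)
qed

lemma rcomp_one:
  assumes m: "inj_sub m" shows "rcomp 1 m = 1"
  using rcomp_rconst[OF m, of 1] by simp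

lemma rcomp_rX:
  assumes m: "inj_sub m" shows "rcomp rX m = m"
proof -
  have "rcomp (Fract [:0,1:] 1) m = peval [:0,1:] m / peval 1 m" by (rule rcomp_Fract[OF m]) simp
  then show ?thesis by (simp add: rX_def peval_X)
qed

lemma rcomp_peval:
  assumes m: "inj_sub m" shows "rcomp (peval q z) m = peval q (rcomp z m)"
proof (induction q)
  case 0 then show ?case using rcomp_rconst[OF m, of 0] by simp
next
  case (pCons a q)
  then show ?case by (simp add: peval_pCons rcomp_add[OF m] rcomp_mult[OF m] rcomp_rconst[OF m])
qed

lemma rcomp_sum:
  assumes m: "inj_sub m" shows "finite A \<Longrightarrow> rcomp (\<Sum>i\<in>A. f i) m = (\<Sum>i\<in>A. rcomp (f i) m)"
proof (induction A rule: finite_induct)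
  case empty then show ?case using rcomp_rconst[OF m, of 0] by simp
next
  case (insert x F) then show ?case by (simp add: rcomp_add[OF m])
qed

lemma rcomp_rcomp:
  assumes m: "inj_sub m" and n: "inj_sub n"
  shows "rcomp (rcomp f m) n = rcomp f (rcomp m n)"
proof -
  obtain a b where f: "f = Fract a b" "b \<noteq> 0" by (cases f)
  have "inj_sub (rcomp m n)"
    unfolding inj_sub_def
  proof (intro allI impI)
    fix c :: "'a poly" assume "c \<noteq> 0"
    then have "peval c m \<noteq> 0" using m by (simp add: inj_sub_def)
    then have "rcomp (peval c m) n \<noteq> 0"
    proof -
      assume h: "peval c m \<noteq> 0"
      have "rcomp (peval c m) n * rcomp (inverse (peval c m)) n = 1"
        using h by (simp add: rcomp_mult[OF n, symmetric] rcomp_one[OF n])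
      then show ?thesis by auto
    qed
    then show "peval c (rcomp m n) \<noteq> 0" by (simp add: rcomp_peval[OF n])
  qed
  then show ?thesis using f m n
    by (simp add: rcomp_Fract rcomp_divide rcomp_peval)
qed

lemma rcomp_id: "rcomp f rX = f"
proof -
  have m: "inj_sub (rX :: 'a::field_gcd poly fract)" by (simp add: inj_sub_def peval_rX Fract_eq0)
  obtain a b where f: "f = Fract a b" "b \<noteq> 0" by (cases f)
  then show ?thesis using m by (simp add: rcomp_Fract peval_rX)
qed


lemma lin_Fract: "rconst u * rX + rconst v = Fract [:v, u:] 1"
  by (simp add: rconst_def rX_def)

lemma lin_nz: "u \<noteq> 0 \<or> v \<noteq> 0 \<Longrightarrow> rconst u * rX + rconst v \<noteq> (0::'a::field_gcd poly fract)"
  by (auto simp: lin_Fract Fract_eq0)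

lemma mobius_Fract:
  fixes a b c e :: "'a::field_gcd"
  assumes "c \<noteq> 0 \<or> e \<noteq> 0"
  shows "mobius a b c e = Fract [:b, a:] [:e, c:]"
  using assms by (auto simp: mobius_def lin_Fract)

lemma mobius_minus_const:
  fixes a b c e t :: "'a::field_gcd"
  assumes "c \<noteq> 0 \<or> e \<noteq> 0"
  shows "mobius a b c e - rconst t = mobius (a - t * c) (b - t * e) c e"
proof -
  have nz: "rconst c * rX + rconst e \<noteq> (0::'a poly fract)" using assms lin_nz by blast
  show ?thesis unfolding mobius_def using nz
    by (simp add: field_simps rconst_diff rconst_mult)
qed

lemma mobius_inverse: "1 / mobius a b c e = mobius c e a b"
  by (simp add: mobius_def)

lemma mobius_rX: "mobius 1 0 0 1 = (rX :: 'a::field_gcd poly fract)"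
  by (simp add: mobius_def)

lemma inj_sub_mobius:
  fixes a b c e :: "'a::field_gcd"
  assumes ac: "\<forall>q::'a poly. degree q > 0 \<longrightarrow> (\<exists>x. poly q x = 0)"
    and det: "a * e - b * c \<noteq> 0"
  shows "inj_sub (mobius a b c e)"
proof -
  have ce: "c \<noteq> 0 \<or> e \<noteq> 0" using det by auto
  have lin: "mobius a b c e - rconst x \<noteq> 0" for x
  proof
    assume h: "mobius a b c e - rconst x = 0"
    have E: "mobius a b c e - rconst x = Fract [:b - x * e, a - x * c:] [:e, c:]"
      unfolding mobius_minus_const[OF ce] using ce by (simp add: mobius_Fract)
    have "Fract [:b - x * e, a - x * c:] [:e, c:] = 0" using h E by simp
    moreover have "[:e, c:] \<noteq> 0" using ce by auto
    ultimately have "[:b - x * e, a - x * c:] = 0" using Fract_eq0 by blast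
    then have "b = x * e" "a = x * c" by auto
    then show False using det by (simp add: algebra_simps)
  qed
  have "\<forall>q. degree q = n \<longrightarrow> q \<noteq> 0 \<longrightarrow> peval q (mobius a b c e) \<noteq> 0" for n
  proof (induction n rule: less_induct)
    case (less n)
    show ?case
    proof (intro allI impI)
      fix q :: "'a poly" assume dq: "degree q = n" and q0: "q \<noteq> 0"
      show "peval q (mobius a b c e) \<noteq> 0"
      proof (cases "n = 0")
        case True
        then obtain k where "q = [:k:]" using dq by (metis degree_eq_zeroE)
        then show ?thesis using q0 by simp
      next
        case False
        then obtain x where "poly q x = 0" using ac dq by auto
        then obtain q1 where q1: "q = [:- x, 1:] * q1" using poly_eq_0_iff_dvd by (metis dvdE)
        have q10: "q1 \<noteq> 0" using q0 q1 by auto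
        have "degree ([:- x, 1:] * q1) = degree [:- x, 1:] + degree q1"
          by (rule degree_mult_eq) (use q10 in auto)
        then have "degree q = 1 + degree q1" using q1 by simp
        then have "degree q1 < n" using dq by simp
        then have "peval q1 (mobius a b c e) \<noteq> 0" using less q10 by blast
        moreover have "peval [:- x, 1:] (mobius a b c e) = mobius a b c e - rconst x"
          by (simp add: peval_pCons rconst_uminus)
        ultimately have "peval [:- x, 1:] (mobius a b c e) * peval q1 (mobius a b c e) \<noteq> 0"
          using lin by simp
        then show ?thesis unfolding q1 peval_mult .
      qed
    qed
  qed
  then show ?thesis by (auto simp: inj_sub_def)
qed

lemma rcomp_mobius:
  fixes a b c e A B C D :: "'a::field_gcd"
  assumes N: "inj_sub (mobius A B C D)" and detN: "A * D - B * C \<noteq> 0"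
    and ce: "c \<noteq> 0 \<or> e \<noteq> 0"
  shows "rcomp (mobius a b c e) (mobius A B C D)
       = mobius (a * A + b * C) (a * B + b * D) (c * A + e * C) (c * B + e * D)"
proof -
  have "C \<noteq> 0 \<or> D \<noteq> 0" using detN by auto
  then have L2: "rconst C * rX + rconst D \<noteq> (0::'a poly fract)" using lin_nz by blast
  have ce2: "c * A + e * C \<noteq> 0 \<or> c * B + e * D \<noteq> 0"
  proof (rule ccontr)
    assume "\<not> ?thesis"
    then have h1: "c * A = - (e * C)" and h2: "c * B = - (e * D)"
      by (auto simp: eq_neg_iff_add_eq_0)
    have "c * (A * D - B * C) = (c * A) * D - (c * B) * C" by (simp add: algebra_simps)
    also have "\<dots> = 0" using h1 h2 by (simp add: algebra_simps)
    finally have c0: "c = 0" using detN by simp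
    have h3: "e * D = - (c * B)" "e * C = - (c * A)" using h1 h2 by auto
    have "e * (A * D - B * C) = A * (e * D) - B * (e * C)" by (simp add: algebra_simps)
    also have "\<dots> = A * (- (c * B)) - B * (- (c * A))" by (simp only: h3)
    also have "\<dots> = 0" by (simp add: algebra_simps)
    finally have "e = 0" using detN by simp
    then show False using c0 ce by simp
  qed
  have L3: "rconst (c * A + e * C) * rX + rconst (c * B + e * D) \<noteq> (0::'a poly fract)"
    using ce2 lin_nz by blast
  have "rcomp (mobius a b c e) (mobius A B C D) =
     (rconst a * mobius A B C D + rconst b) / (rconst c * mobius A B C D + rconst e)"
    unfolding mobius_def[of a b c e]
    by (simp add: rcomp_divide[OF N] rcomp_add[OF N] rcomp_mult[OF N] rcomp_rconst[OF N] rcomp_rX[OF N])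
  also have "\<dots> = mobius (a * A + b * C) (a * B + b * D) (c * A + e * C) (c * B + e * D)"
  proof -
    define L1 where "L1 = rconst A * rX + rconst B"
    define L2 where "L2 = rconst C * rX + rconst D"
    have l2: "L2 \<noteq> 0" using L2 by (simp add: L2_def)
    have m: "mobius A B C D = L1 / L2" by (simp add: mobius_def L1_def L2_def)
    have e1: "rconst a * (L1 / L2) + rconst b = (rconst a * L1 + rconst b * L2) / L2"
      using l2 by (simp add: field_simps)
    have e2: "rconst c * (L1 / L2) + rconst e = (rconst c * L1 + rconst e * L2) / L2"
      using l2 by (simp add: field_simps)
    have e3: "rconst a * L1 + rconst b * L2 = rconst (a * A + b * C) * rX + rconst (a * B + b * D)"
      by (simp add: L1_def L2_def rconst_add rconst_mult algebra_simps)
    have e4: "rconst c * L1 + rconst e * L2 = rconst (c * A + e * C) * rX + rconst (c * B + e * D)"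
      by (simp add: L1_def L2_def rconst_add rconst_mult algebra_simps)
    have "(rconst a * mobius A B C D + rconst b) / (rconst c * mobius A B C D + rconst e)
       = ((rconst (a * A + b * C) * rX + rconst (a * B + b * D)) / L2) /
         ((rconst (c * A + e * C) * rX + rconst (c * B + e * D)) / L2)"
      by (simp only: m e1 e2 e3 e4)
    also have "\<dots> = (rconst (a * A + b * C) * rX + rconst (a * B + b * D)) /
         (rconst (c * A + e * C) * rX + rconst (c * B + e * D))"
      using l2 L3 by simp
    finally show ?thesis unfolding mobius_def .
  qed
  finally show ?thesis .
qed


lemma peval_exact:
  fixes z :: "'a::field_gcd poly fract"
  assumes z: "exact n z" and n: "n > 0"
  shows "q \<noteq> 0 \<Longrightarrow> exact (int (degree q) * n) (peval q z)"
proof (induction q rule: pCons_induct)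
  case 0 then show ?case by simp
next
  case (pCons a q)
  show ?case
  proof (cases "q = 0")
    case True
    then have "a \<noteq> 0" using pCons by simp
    then show ?thesis using True by (simp add: exact_rconst)
  next
    case False
    have "exact (n + int (degree q) * n) (z * peval q z)"
      using exact_mult[OF z pCons.IH[OF False]] .
    then have "exact (n + int (degree q) * n) (rconst a + z * peval q z)"
      using n by (intro exact_add2[OF bnd_rconst])
        (auto, metis add_pos_nonneg mult_nonneg_nonneg of_nat_0_le_iff less_imp_le)
    then show ?thesis using False by (simp add: peval_pCons algebra_simps)
  qed
qed

lemma peval_bnd:
  fixes z :: "'a::field_gcd poly fract"
  assumes z: "bnd 0 z"
  shows "bnd 0 (peval q z)"
proof (induction q)
  case 0 then show ?case by simp
next
  case (pCons a q)
  have "bnd (0 + 0) (z * peval q z)" using bnd_mult[OF z pCons.IH] .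
  then show ?case by (simp add: peval_pCons bnd_add bnd_rconst)
qed

lemma mobius_exact:
  fixes a b e :: "'a::field_gcd"
  assumes "a * e - b * 0 \<noteq> 0"
  shows "exact 1 (mobius a b 0 e)"
  using assms by (simp add: mobius_Fract exact_Fract)

lemma mobius_bnd:
  fixes a b c e :: "'a::field_gcd"
  assumes "c \<noteq> 0"
  shows "bnd 0 (mobius a b c e)"
  using assms by (simp add: mobius_Fract bnd_Fract)

lemma good_polyD:
  assumes "good_poly p dd q"
  shows "q \<noteq> 0" "degree q = dd" "dd > 0" "\<not> p dvd dd"
proof -
  show q: "q \<noteq> 0" using assms by (auto simp: good_poly_def)
  show "degree q = dd" using assms by (simp add: good_poly_def)
  show "\<not> p dvd dd" using assms by (simp add: good_poly_def)
  show "dd > 0" using assms by (auto simp: good_poly_def intro: Nat.gr0I)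
qed

lemma term_case:
  fixes x y z w :: "'a::field_gcd"
  assumes g: "good_poly p dd q" and det: "x * w - y * z \<noteq> 0"
  shows "z = 0 \<Longrightarrow> exact (int dd) (peval q (mobius x y z w))"
    and "z \<noteq> 0 \<Longrightarrow> bnd 0 (peval q (mobius x y z w))"
proof -
  assume z: "z = 0"
  have "exact 1 (mobius x y 0 w)" using det z by (intro mobius_exact) simp
  then show "exact (int dd) (peval q (mobius x y z w))"
    using peval_exact[of 1 "mobius x y 0 w" q] good_polyD[OF g] z by simp
next
  assume "z \<noteq> 0"
  then show "bnd 0 (peval q (mobius x y z w))" by (intro peval_bnd mobius_bnd)
qed

lemma rcomp_form:
  fixes a b c e :: "'a::field_gcd"
  assumes T: "inj_sub (mobius a b c e)" and det: "a * e - b * c \<noteq> 0"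
  shows "rcomp (form_fun r F G H J \<theta>) (mobius a b c e) =
    peval F (mobius a b c e) + peval G (mobius c e a b) + peval H (mobius c e (a - c) (b - e)) +
    (\<Sum>j\<in>{4..r+1}. peval (J j) (mobius c e (a - \<theta> j * c) (b - \<theta> j * e)))"
proof -
  have ce: "c \<noteq> 0 \<or> e \<noteq> 0" using det by auto
  have i1: "rcomp (1 / rX) (mobius a b c e) = mobius c e a b"
    by (simp add: rcomp_divide[OF T] rcomp_one[OF T] rcomp_rX[OF T] mobius_inverse)
  have i2: "rcomp (1 / (rX - rconst t)) (mobius a b c e) = mobius c e (a - t * c) (b - t * e)" for t
    by (simp add: rcomp_divide[OF T] rcomp_one[OF T] rcomp_rX[OF T] rcomp_diff[OF T]
        rcomp_rconst[OF T] mobius_minus_const[OF ce] mobius_inverse)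
  have i3: "rcomp (1 / (rX - 1)) (mobius a b c e) = mobius c e (a - c) (b - e)"
    using i2[of 1] by simp
  have r0: "rcomp 0 (mobius a b c e) = 0" using rcomp_rconst[OF T, of 0] by simp
  show ?thesis unfolding form_fun_def
    by (simp add: r0 rcomp_add[OF T] rcomp_sum[OF T] rcomp_peval[OF T] rcomp_rX[OF T] i1 i2 i3)
qed

lemma good_formD:
  assumes "good_form p r d F G H J \<theta>"
  shows "good_poly p (d 1) F" "good_poly p (d 2) G" "good_poly p (d 3) H"
    "\<And>j. j \<in> {4..r+1} \<Longrightarrow> good_poly p (d j) (J j)"
    "\<And>j. j \<in> {4..r+1} \<Longrightarrow> \<theta> j \<noteq> 0" "\<And>j. j \<in> {4..r+1} \<Longrightarrow> \<theta> j \<noteq> 1"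
    "inj_on \<theta> {4..r+1}"
  using assms by (auto simp: good_form_def)

lemma classify:
  fixes a b c e :: "'a::field_gcd"
  assumes ac: "\<forall>q::'a poly. degree q > 0 \<longrightarrow> (\<exists>x. poly q x = 0)"
    and gf: "good_form p r d F G H J \<theta>" and det: "a * e - b * c \<noteq> 0"
  defines "R \<equiv> rcomp (form_fun r F G H J \<theta>) (mobius a b c e)"
  shows "c = 0 \<Longrightarrow> exact (int (d 1)) R"
    and "c \<noteq> 0 \<Longrightarrow> a = 0 \<Longrightarrow> exact (int (d 2)) R"
    and "c \<noteq> 0 \<Longrightarrow> a = c \<Longrightarrow> exact (int (d 3)) R"
    and "c \<noteq> 0 \<Longrightarrow> j \<in> {4..r+1} \<Longrightarrow> a = \<theta> j * c \<Longrightarrow> exact (int (d j)) R"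
    and "c \<noteq> 0 \<Longrightarrow> a \<noteq> 0 \<Longrightarrow> a \<noteq> c \<Longrightarrow> (\<forall>j\<in>{4..r+1}. a \<noteq> \<theta> j * c) \<Longrightarrow> bnd 0 R"
proof -
  note gd = good_formD[OF gf]
  have T: "inj_sub (mobius a b c e)" using inj_sub_mobius[OF ac det] .
  define tF where "tF = peval F (mobius a b c e)"
  define tG where "tG = peval G (mobius c e a b)"
  define tH where "tH = peval H (mobius c e (a - c) (b - e))"
  define tJ where "tJ j = peval (J j) (mobius c e (a - \<theta> j * c) (b - \<theta> j * e))" for j
  have R: "R = tF + tG + tH + (\<Sum>j\<in>{4..r+1}. tJ j)"
    unfolding R_def tF_def tG_def tH_def tJ_def using rcomp_form[OF T det] by simp
  have detG: "c * b - e * a \<noteq> 0" using det by (simp add: algebra_simps)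
  have detJ: "c * (b - t * e) - e * (a - t * c) \<noteq> 0" for t using det by (simp add: algebra_simps)
  have F1: "c = 0 \<Longrightarrow> exact (int (d 1)) tF" unfolding tF_def using term_case(1)[OF gd(1) det] by simp
  have F2: "c \<noteq> 0 \<Longrightarrow> bnd 0 tF" unfolding tF_def using term_case(2)[OF gd(1) det] by simp
  have G1: "a = 0 \<Longrightarrow> exact (int (d 2)) tG" unfolding tG_def using term_case(1)[OF gd(2) detG] by simp
  have G2: "a \<noteq> 0 \<Longrightarrow> bnd 0 tG" unfolding tG_def using term_case(2)[OF gd(2) detG] by simp
  have H1: "a = c \<Longrightarrow> exact (int (d 3)) tH" unfolding tH_def using term_case(1)[OF gd(3) detJ[of 1]] by simp
  have H2: "a \<noteq> c \<Longrightarrow> bnd 0 tH" unfolding tH_def using term_case(2)[OF gd(3) detJ[of 1]] by simp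
  have J1: "exact (int (d j)) (tJ j)" if j: "j \<in> {4..r+1}" and a: "a = \<theta> j * c" for j
  proof -
    have "a - \<theta> j * c = 0" using a by simp
    then show ?thesis unfolding tJ_def using term_case(1)[OF gd(4)[OF j] detJ[of "\<theta> j"]] by simp
  qed
  have J2: "bnd 0 (tJ j)" if j: "j \<in> {4..r+1}" and a: "a \<noteq> \<theta> j * c" for j
  proof -
    have "a - \<theta> j * c \<noteq> 0" using a by simp
    then show ?thesis unfolding tJ_def using term_case(2)[OF gd(4)[OF j] detJ[of "\<theta> j"]] by simp
  qed
  have dpos: "d 1 > 0" "d 2 > 0" "d 3 > 0" using good_polyD(3)[OF gd(1)] good_polyD(3)[OF gd(2)]
      good_polyD(3)[OF gd(3)] by auto
  have dposj: "j \<in> {4..r+1} \<Longrightarrow> d j > 0" for j using good_polyD(3)[OF gd(4)] by auto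
  show "c = 0 \<Longrightarrow> exact (int (d 1)) R"
  proof -
    assume c: "c = 0"
    then have a: "a \<noteq> 0" using det by auto
    have "bnd 0 (tG + tH + (\<Sum>j\<in>{4..r+1}. tJ j))"
      using G2[OF a] H2 J2 a c gd(5) by (auto intro!: bnd_add bnd_sum)
    then have "exact (int (d 1)) (tF + (tG + tH + (\<Sum>j\<in>{4..r+1}. tJ j)))"
      using F1[OF c] dpos by (intro exact_add) auto
    then show ?thesis unfolding R by (simp add: add.assoc)
  qed
  show "c \<noteq> 0 \<Longrightarrow> a = 0 \<Longrightarrow> exact (int (d 2)) R"
  proof -
    assume c: "c \<noteq> 0" and a: "a = 0"
    have "bnd 0 (tF + tH + (\<Sum>j\<in>{4..r+1}. tJ j))"
      using F2[OF c] H2 J2 a c gd(5) by (auto intro!: bnd_add bnd_sum)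
    then have "exact (int (d 2)) (tG + (tF + tH + (\<Sum>j\<in>{4..r+1}. tJ j)))"
      using G1[OF a] dpos by (intro exact_add) auto
    then show ?thesis unfolding R by (simp add: algebra_simps)
  qed
  show "c \<noteq> 0 \<Longrightarrow> a = c \<Longrightarrow> exact (int (d 3)) R"
  proof -
    assume c: "c \<noteq> 0" and a: "a = c"
    have "bnd 0 (tF + tG + (\<Sum>j\<in>{4..r+1}. tJ j))"
      using F2[OF c] G2 J2 a c gd(6) by (auto intro!: bnd_add bnd_sum)
    then have "exact (int (d 3)) (tH + (tF + tG + (\<Sum>j\<in>{4..r+1}. tJ j)))"
      using H1[OF a] dpos by (intro exact_add) auto
    then show ?thesis unfolding R by (simp add: algebra_simps)
  qed
  show "c \<noteq> 0 \<Longrightarrow> j \<in> {4..r+1} \<Longrightarrow> a = \<theta> j * c \<Longrightarrow> exact (int (d j)) R"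
  proof -
    assume c: "c \<noteq> 0" and j: "j \<in> {4..r+1}" and a: "a = \<theta> j * c"
    have oth: "i \<in> {4..r+1} - {j} \<Longrightarrow> a \<noteq> \<theta> i * c" for i
    proof
      assume i: "i \<in> {4..r+1} - {j}" and "a = \<theta> i * c"
      then have "\<theta> i = \<theta> j" using a c by simp
      then show False using gd(7) i j by (auto dest: inj_onD)
    qed
    have S: "(\<Sum>i\<in>{4..r+1}. tJ i) = tJ j + (\<Sum>i\<in>{4..r+1} - {j}. tJ i)"
      using j sum.remove[of "{4..r+1}" j tJ] by (simp del: atLeastAtMost_iff add: finite_atLeastAtMost)
    have sb: "bnd 0 (\<Sum>i\<in>{4..r+1} - {j}. tJ i)"
    proof (rule bnd_sum)
      fix i assume i: "i \<in> {4..r+1} - {j}"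
      show "bnd 0 (tJ i)" using J2[of i] oth[OF i] i by blast
    qed simp
    have "bnd 0 (tF + tG + tH + (\<Sum>i\<in>{4..r+1} - {j}. tJ i))"
      using F2[OF c] G2 H2 sb a c gd(5)[OF j] gd(6)[OF j] by (auto intro!: bnd_add)
    then have "exact (int (d j)) (tJ j + (tF + tG + tH + (\<Sum>i\<in>{4..r+1} - {j}. tJ i)))"
      using J1[OF j a] dposj[OF j] by (intro exact_add) auto
    then show ?thesis unfolding R S by (simp add: algebra_simps)
  qed
  show "c \<noteq> 0 \<Longrightarrow> a \<noteq> 0 \<Longrightarrow> a \<noteq> c \<Longrightarrow> (\<forall>j\<in>{4..r+1}. a \<noteq> \<theta> j * c) \<Longrightarrow> bnd 0 R"
    unfolding R using F2 G2 H2 J2 by (auto intro!: bnd_add bnd_sum)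
qed


lemma exact_scale:
  fixes B :: "'a::field_gcd poly fract"
  assumes "lam \<noteq> 0" "exact e (rconst lam * B)" shows "exact e B"
proof -
  have "exact (0 + e) (rconst (inverse lam) * (rconst lam * B))"
    using assms by (intro exact_mult exact_rconst) auto
  moreover have "rconst (inverse lam) * (rconst lam * B) = B"
    using assms(1) by (simp add: rconst_mult[symmetric])
  ultimately show ?thesis by simp
qed

lemma exact_scale':
  fixes B :: "'a::field_gcd poly fract"
  assumes "lam \<noteq> 0" "exact e B" shows "exact e (rconst lam * B)"
  using exact_mult[OF exact_rconst[OF assms(1)] assms(2)] by simp

lemma bnd_scale:
  fixes B :: "'a::field_gcd poly fract"
  assumes "bnd 0 B" shows "bnd 0 (rconst lam * B)"
  using bnd_mult[OF bnd_rconst assms] by simp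

lemma key_ord:
  fixes A B h :: "'a::field_gcd poly fract"
  assumes eq: "A = rconst lam * B + (h ^ p - h)" and lam: "lam \<noteq> 0" and p: "p > 1"
    and eA: "exact e A" and e: "e > 0" and pe: "\<not> int p dvd e"
    and Bp: "\<And>k. exact k B \<Longrightarrow> k > 0 \<Longrightarrow> \<not> int p dvd k"
  shows "exact e B"
proof (cases "bnd 0 h")
  case True
  have "bnd (int p * 0) (h ^ p)" using bnd_power[OF True] by simp
  then have "bnd 0 (h ^ p - h)" using True bnd_diff by simp
  then have "exact e (A - (h ^ p - h))" using eA e exact_diff by blast
  then have "exact e (rconst lam * B)" using eq by simp
  then show ?thesis using exact_scale lam by blast
next
  case False
  then obtain m where m: "m > 0" "exact m h" using bnd_or_exact by blast
  have hp: "exact (int p * m) (h ^ p)" using exact_power[OF m(2)] .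
  have lt: "m < int p * m" using p m by simp
  have X: "exact (int p * m) (h ^ p - h)" using exact_diff[OF hp exact_bnd[OF m(2) order_refl] lt] .
  have pm: "int p * m > 0" using m p by simp
  show ?thesis
  proof (cases "bnd 0 (rconst lam * B)")
    case True
    have "exact (int p * m) A" unfolding eq using exact_add2[OF True X pm] .
    then have "e = int p * m" using eA exact_unique by blast
    then show ?thesis using pe by simp
  next
    case False
    then obtain kk where kk: "kk > 0" "exact kk (rconst lam * B)" using bnd_or_exact by blast
    have oB: "exact kk B" using exact_scale[OF lam kk(2)] .
    have "kk \<noteq> int p * m" using Bp[OF oB kk(1)] by auto
    then consider "kk < int p * m" | "kk > int p * m" by linarith
    then show ?thesis
    proof cases
      case 1
      have "exact (int p * m) A" unfolding eq using exact_add2[OF exact_bnd[OF kk(2) order_refl] X 1] .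
      then have "e = int p * m" using eA exact_unique by blast
      then show ?thesis using pe by simp
    next
      case 2
      have "exact kk A" unfolding eq using exact_add[OF kk(2) exact_bnd[OF X order_refl] 2] .
      then have "e = kk" using eA exact_unique by blast
      then show ?thesis using oB by simp
    qed
  qed
qed

lemma Bprop:
  fixes a b c e :: "'a::field_gcd"
  assumes ac: "\<forall>q::'a poly. degree q > 0 \<longrightarrow> (\<exists>x. poly q x = 0)"
    and gf: "good_form p r d F G H J \<theta>" and det: "a * e - b * c \<noteq> 0"
    and ex: "exact k (rcomp (form_fun r F G H J \<theta>) (mobius a b c e))" and k: "k > 0"
  shows "(c = 0 \<and> k = int (d 1)) \<or> (c \<noteq> 0 \<and> a = 0 \<and> k = int (d 2)) \<or>
         (c \<noteq> 0 \<and> a = c \<and> k = int (d 3)) \<or>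
         (\<exists>j\<in>{4..r+1}. c \<noteq> 0 \<and> a = \<theta> j * c \<and> k = int (d j))"
proof -
  note cl = classify[OF ac gf det]
  show ?thesis
  proof (cases "c = 0")
    case True then show ?thesis using cl(1) ex exact_unique by blast
  next
    case c: False
    show ?thesis
    proof (cases "a = 0")
      case True then show ?thesis using cl(2)[OF c] ex exact_unique c by blast
    next
      case a: False
      show ?thesis
      proof (cases "a = c")
        case True then show ?thesis using cl(3)[OF c] ex exact_unique c by blast
      next
        case ac': False
        show ?thesis
        proof (cases "\<exists>j\<in>{4..r+1}. a = \<theta> j * c")
          case True
          then obtain j where j: "j \<in> {4..r+1}" "a = \<theta> j * c" by blast
          then show ?thesis using cl(4)[OF c j] ex exact_unique c by blast
        next
          case False
          then have "bnd 0 (rcomp (form_fun r F G H J \<theta>) (mobius a b c e))"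
            using cl(5)[OF c a ac'] by blast
          then show ?thesis using exact_not_bnd[OF ex k] by simp
        qed
      qed
    qed
  qed
qed

lemma Bprop_p:
  fixes a b c e :: "'a::field_gcd"
  assumes ac: "\<forall>q::'a poly. degree q > 0 \<longrightarrow> (\<exists>x. poly q x = 0)"
    and gf: "good_form p r d F G H J \<theta>" and det: "a * e - b * c \<noteq> 0"
    and ex: "exact k (rcomp (form_fun r F G H J \<theta>) (mobius a b c e))" and k: "k > 0"
  shows "\<not> int p dvd k"
proof -
  note gd = good_formD[OF gf]
  have nd: "\<not> int p dvd int (d i)" if "good_poly p (d i) (q::'a poly)" for i q
    using good_polyD(4)[OF that] by (simp add: int_dvd_int_iff)
  show ?thesis using Bprop[OF ac gf det ex k] nd gd by blast
qed


lemma prod_det: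
  fixes \<alpha> \<beta> \<gamma> \<delta> a b c e :: "'a::field"
  shows "(\<alpha>*a+\<beta>*c)*(\<gamma>*b+\<delta>*e) - (\<alpha>*b+\<beta>*e)*(\<gamma>*a+\<delta>*c) = (\<alpha>*\<delta> - \<beta>*\<gamma>)*(a*e - b*c)"
  by (simp add: algebra_simps)

lemma part2:
  fixes \<alpha> \<beta> \<gamma> \<delta> lam :: "'a::field_gcd"
  assumes ac: "\<forall>q::'a poly. degree q > 0 \<longrightarrow> (\<exists>x. poly q x = 0)"
    and gf: "good_form p r d F G H J \<theta>" and gf': "good_form p r d F' G' H' J' \<theta>'"
    and d12: "d 2 < d 1" and d23: "d 3 < d 2"
    and disj: "{d 1, d 2, d 3} \<inter> d ` {4..r+1} = {}"
    and p1: "p > 1" and det: "\<alpha> * \<delta> - \<beta> * \<gamma> \<noteq> 0" and lam: "lam \<noteq> 0"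
    and eq: "rcomp (form_fun r F G H J \<theta>) (mobius \<alpha> \<beta> \<gamma> \<delta>)
             = rconst lam * form_fun r F' G' H' J' \<theta>' + h ^ p - h"
  shows "\<gamma> = 0 \<and> \<beta> = 0 \<and> \<delta> = \<alpha>"
proof -
  define \<Phi> where "\<Phi> = form_fun r F G H J \<theta>"
  define \<Phi>' where "\<Phi>' = form_fun r F' G' H' J' \<theta>'"
  have M: "inj_sub (mobius \<alpha> \<beta> \<gamma> \<delta>)" using inj_sub_mobius[OF ac det] .
  have gd: "\<gamma> \<noteq> 0 \<or> \<delta> \<noteq> 0" using det by auto
  have nd: "\<not> int p dvd int (d i)" if "good_poly p (d i) (q::'a poly)" for i q
    using good_polyD(4)[OF that] by (simp add: int_dvd_int_iff)
  have dpos: "d i > 0" if "good_poly p (d i) (q::'a poly)" for i q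
    using good_polyD(3)[OF that] .
  note g = good_formD[OF gf]
  have step: "exact (int k) (rcomp \<Phi>' (mobius a b c e))"
    if dN: "a * e - b * c \<noteq> 0"
      and ex: "exact (int k) (rcomp \<Phi> (mobius (\<alpha>*a+\<beta>*c) (\<alpha>*b+\<beta>*e) (\<gamma>*a+\<delta>*c) (\<gamma>*b+\<delta>*e)))"
      and k: "k > 0" and pk: "\<not> int p dvd int k"
    for a b c e k
  proof -
    have N: "inj_sub (mobius a b c e)" using inj_sub_mobius[OF ac dN] .
    have "rcomp (rcomp \<Phi> (mobius \<alpha> \<beta> \<gamma> \<delta>)) (mobius a b c e)
        = rcomp \<Phi> (mobius (\<alpha>*a+\<beta>*c) (\<alpha>*b+\<beta>*e) (\<gamma>*a+\<delta>*c) (\<gamma>*b+\<delta>*e))"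
      using rcomp_rcomp[OF M N] rcomp_mobius[OF N dN gd] by simp
    moreover have "rcomp (rcomp \<Phi> (mobius \<alpha> \<beta> \<gamma> \<delta>)) (mobius a b c e)
        = rconst lam * rcomp \<Phi>' (mobius a b c e) + (rcomp h (mobius a b c e) ^ p - rcomp h (mobius a b c e))"
      using eq unfolding \<Phi>_def[symmetric] \<Phi>'_def[symmetric]
      by (simp add: rcomp_add[OF N] rcomp_diff[OF N] rcomp_mult[OF N] rcomp_power[OF N] rcomp_rconst[OF N])
    ultimately have E: "rcomp \<Phi> (mobius (\<alpha>*a+\<beta>*c) (\<alpha>*b+\<beta>*e) (\<gamma>*a+\<delta>*c) (\<gamma>*b+\<delta>*e))
        = rconst lam * rcomp \<Phi>' (mobius a b c e) + (rcomp h (mobius a b c e) ^ p - rcomp h (mobius a b c e))"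
      by simp
    show ?thesis
      using key_ord[OF E lam p1 ex _ pk] k Bprop_p[OF ac gf' dN] unfolding \<Phi>'_def by simp
  qed
  have detP: "(\<alpha>*a+\<beta>*c)*(\<gamma>*b+\<delta>*e) - (\<alpha>*b+\<beta>*e)*(\<gamma>*a+\<delta>*c) \<noteq> 0"
    if "a * e - b * c \<noteq> 0" for a b c e
    using prod_det[of \<alpha> a \<beta> c \<gamma> b \<delta> e] det that by simp
  have d1j: "d 1 \<noteq> d j" "d 2 \<noteq> d j" "d 3 \<noteq> d j" if "j \<in> {4..r+1}" for j
    using disj that by blast+
  have g0: "\<gamma> = 0"
  proof -
    have dN: "\<delta> * \<alpha> - (- \<beta>) * (- \<gamma>) \<noteq> 0" using det by (simp add: algebra_simps)
    have c0: "\<gamma> * \<delta> + \<delta> * (- \<gamma>) = 0" by (simp add: algebra_simps)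
    have "exact (int (d 1)) (rcomp \<Phi> (mobius (\<alpha>*\<delta>+\<beta>*(-\<gamma>)) (\<alpha>*(-\<beta>)+\<beta>*\<alpha>) (\<gamma>*\<delta>+\<delta>*(-\<gamma>)) (\<gamma>*(-\<beta>)+\<delta>*\<alpha>)))"
      unfolding \<Phi>_def using classify(1)[OF ac gf detP[OF dN] c0] .
    then have ex: "exact (int (d 1)) (rcomp \<Phi>' (mobius \<delta> (-\<beta>) (-\<gamma>) \<alpha>))"
      using step[OF dN] dpos[OF g(1)] nd[OF g(1)] by blast
    show ?thesis
      using Bprop[OF ac gf' dN ex[unfolded \<Phi>'_def]] dpos[OF g(1)] d12 d23 d1j by auto
  qed
  have b0: "\<beta> = 0"
  proof -
    have dN: "(- \<beta>) * (- \<gamma>) - \<delta> * \<alpha> \<noteq> 0" using det by (simp add: algebra_simps)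
    have c0: "\<gamma> * (- \<beta>) + \<delta> * \<alpha> \<noteq> 0" using det by (simp add: algebra_simps)
    have a0: "\<alpha> * (- \<beta>) + \<beta> * \<alpha> = 0" by (simp add: algebra_simps)
    have "exact (int (d 2)) (rcomp \<Phi> (mobius (\<alpha>*(-\<beta>)+\<beta>*\<alpha>) (\<alpha>*\<delta>+\<beta>*(-\<gamma>)) (\<gamma>*(-\<beta>)+\<delta>*\<alpha>) (\<gamma>*\<delta>+\<delta>*(-\<gamma>))))"
      unfolding \<Phi>_def using classify(2)[OF ac gf detP[OF dN] c0 a0] .
    then have ex: "exact (int (d 2)) (rcomp \<Phi>' (mobius (-\<beta>) \<delta> \<alpha> (-\<gamma>)))"
      using step[OF dN] dpos[OF g(2)] nd[OF g(2)] by blast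
    show ?thesis
      using Bprop[OF ac gf' dN ex[unfolded \<Phi>'_def]] dpos[OF g(2)] d12 d23 d1j by auto
  qed
  have de: "\<delta> = \<alpha>"
  proof -
    have ad: "\<alpha> \<noteq> 0" "\<delta> \<noteq> 0" using det g0 b0 by auto
    have dN: "\<delta> * 0 - \<delta> * \<alpha> \<noteq> 0" using ad by simp
    have c0: "\<gamma> * \<delta> + \<delta> * \<alpha> \<noteq> 0" using ad g0 by simp
    have a0: "\<alpha> * \<delta> + \<beta> * \<alpha> = \<gamma> * \<delta> + \<delta> * \<alpha>" using g0 b0 by (simp add: algebra_simps)
    have "exact (int (d 3)) (rcomp \<Phi> (mobius (\<alpha>*\<delta>+\<beta>*\<alpha>) (\<alpha>*\<delta>+\<beta>*0) (\<gamma>*\<delta>+\<delta>*\<alpha>) (\<gamma>*\<delta>+\<delta>*0)))"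
      unfolding \<Phi>_def using classify(3)[OF ac gf detP[OF dN] c0 a0] .
    then have ex: "exact (int (d 3)) (rcomp \<Phi>' (mobius \<delta> \<delta> \<alpha> 0))"
      using step[OF dN] dpos[OF g(3)] nd[OF g(3)] by blast
    show ?thesis
      using Bprop[OF ac gf' dN ex[unfolded \<Phi>'_def]] dpos[OF g(3)] d12 d23 d1j ad by auto
  qed
  show ?thesis using g0 b0 de by simp
qed


lemma char_fract: "CHAR('a::field_gcd poly fract) = CHAR('a)"
proof (rule CHAR_eqI)
  show "of_nat CHAR('a) = (0 :: 'a poly fract)"
    by (simp add: of_nat_fract Fract_eq0 of_nat_eq_0_iff_char_dvd)
  fix x assume "of_nat x = (0 :: 'a poly fract)"
  then have "of_nat x = (0 :: 'a poly)" by (simp add: of_nat_fract Fract_eq0)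
  then show "CHAR('a) dvd x" by (simp add: of_nat_eq_0_iff_char_dvd)
qed

lemma frob:
  fixes x y :: "'a::field_gcd poly fract"
  assumes "prime p" "CHAR('a) = p"
  shows "(x + y) ^ p = x ^ p + y ^ p"
proof -
  have "prime CHAR('a poly fract)" using assms by (simp add: char_fract)
  moreover have "p = CHAR('a poly fract)" using assms by (simp add: char_fract)
  ultimately show ?thesis by (rule freshmans_dream)
qed

lemma Fract_add1: "Fract (a + b) 1 = Fract a 1 + Fract (b::'a::idom) 1" by simp
lemma Fract_diff1: "Fract (a - b) 1 = Fract a 1 - Fract (b::'a::idom) 1" by simp
lemma Fract_power1: "Fract a 1 ^ n = Fract (a ^ n) (1::'a::idom)"
  by (induction n) (simp_all add: One_fract_def)
lemma Fract_const1: "Fract [:k:] 1 = rconst k" by (simp add: rconst_def)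
lemma Fract_smult1: "Fract (smult k q) 1 = rconst k * Fract q 1" by (simp add: rconst_def)

lemma poly_part:
  fixes h :: "'a::field_gcd poly fract"
  shows "\<exists>q s. h = Fract q 1 + s \<and> bnd (-1) s"
proof -
  obtain a b where h: "h = Fract a b" "b \<noteq> 0" by (cases h)
  have "Fract a b = Fract (a div b) 1 + Fract (a mod b) b"
    using h(2) by (simp add: eq_fract div_mult_mod_eq)
  moreover have "bnd (-1) (Fract (a mod b) b)"
    using degree_mod_less[OF h(2), of a] h(2) by (auto simp: bnd_Fract)
  ultimately show ?thesis using h by blast
qed

definition nice :: "nat \<Rightarrow> 'a::field_gcd poly fract \<Rightarrow> bool" where
  "nice p f \<longleftrightarrow> (\<exists>Q k s. f = Fract Q 1 + rconst k + s \<and> bnd (-1) s \<and> (\<forall>i. p dvd i \<longrightarrow> coeff Q i = 0))"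

lemma nice_poly: "good_poly p dd q \<Longrightarrow> nice p (Fract q 1)"
  unfolding nice_def good_poly_def by (rule exI[of _ q], rule exI[of _ 0], rule exI[of _ 0]) simp

lemma nice_cs: "bnd (-1) s \<Longrightarrow> nice p (rconst k + s)"
  unfolding nice_def by (rule exI[of _ 0], rule exI[of _ k], rule exI[of _ s]) (simp add: Zero_fract_def)

lemma nice_add: assumes "nice p f" "nice p g" shows "nice p (f + g)"
proof -
  obtain Q k s where f: "f = Fract Q 1 + rconst k + s" "bnd (-1) s" "\<forall>i. p dvd i \<longrightarrow> coeff Q i = 0"
    using assms(1) nice_def by blast
  obtain Q' k' s' where g: "g = Fract Q' 1 + rconst k' + s'" "bnd (-1) s'" "\<forall>i. p dvd i \<longrightarrow> coeff Q' i = 0"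
    using assms(2) nice_def by blast
  have "f + g = Fract (Q + Q') 1 + rconst (k + k') + (s + s')"
    using f g by (simp add: rconst_add algebra_simps)
  then show ?thesis unfolding nice_def using f g bnd_add by (intro exI[of _ "Q + Q'"] exI[of _ "k + k'"] exI[of _ "s + s'"]) auto
qed

lemma nice_scale: assumes "nice p f" shows "nice p (rconst l * f)"
proof -
  obtain Q k s where f: "f = Fract Q 1 + rconst k + s" "bnd (-1) s" "\<forall>i. p dvd i \<longrightarrow> coeff Q i = 0"
    using assms(1) nice_def by blast
  have "rconst l * f = Fract (smult l Q) 1 + rconst (l * k) + rconst l * s"
    using f by (simp add: rconst_mult Fract_smult1 algebra_simps)
  moreover have "bnd (-1) (rconst l * s)" using bnd_mult[OF bnd_rconst f(2)] by simp
  ultimately show ?thesis unfolding nice_def using f by (intro exI[of _ "smult l Q"] exI[of _ "l * k"] exI[of _ "rconst l * s"]) auto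
qed

lemma nice_diff: "nice p f \<Longrightarrow> nice p g \<Longrightarrow> nice p (f - rconst l * g)"
  using nice_add[of p f "rconst (- l) * g"] nice_scale[of p g "- l"] by (simp add: rconst_uminus)

lemma nice_sum: "finite A \<Longrightarrow> (\<And>i. i \<in> A \<Longrightarrow> nice p (f i)) \<Longrightarrow> nice p (\<Sum>i\<in>A. f i)"
proof (induction A rule: finite_induct)
  case empty
  show ?case using nice_cs[of 0 p 0] by simp
next
  case (insert x F) then show ?case by (simp add: nice_add)
qed

lemma peval_split:
  fixes z s :: "'a::field_gcd poly fract"
  assumes z: "z = rconst t + s" and s: "bnd (-1) s"
  shows "\<exists>s'. peval q z = rconst (poly q t) + s' \<and> bnd (-1) s'"
proof (induction q)
  case 0 then show ?case by (intro exI[of _ 0]) simp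
next
  case (pCons a q)
  then obtain s1 where s1: "peval q z = rconst (poly q t) + s1" "bnd (-1) s1" by blast
  have "peval (pCons a q) z = rconst (poly (pCons a q) t) + (rconst t * s1 + s * rconst (poly q t) + s * s1)"
    using s1 z by (simp add: peval_pCons rconst_add rconst_mult algebra_simps)
  moreover have "bnd (-1) (rconst t * s1 + s * rconst (poly q t) + s * s1)"
  proof -
    have "bnd (0 + -1) (rconst t * s1)" by (rule bnd_mult[OF bnd_rconst s1(2)])
    moreover have "bnd (-1 + 0) (s * rconst (poly q t))" by (rule bnd_mult[OF s bnd_rconst])
    moreover have "bnd (-1 + -1) (s * s1)" by (rule bnd_mult[OF s s1(2)])
    ultimately show ?thesis by (auto intro!: bnd_add elim: bnd_mono)
  qed
  ultimately show ?case by blast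
qed

lemma mob_split:
  fixes a b c e :: "'a::field_gcd"
  assumes c: "c \<noteq> 0"
  shows "\<exists>s. mobius a b c e = rconst (a / c) + s \<and> bnd (-1) s"
proof -
  have "mobius a b c e - rconst (a / c) = mobius (a - a / c * c) (b - a / c * e) c e"
    using c by (simp add: mobius_minus_const)
  also have "\<dots> = Fract [:b - a / c * e:] [:e, c:]" using c by (simp add: mobius_Fract)
  finally have E: "mobius a b c e - rconst (a / c) = Fract [:b - a / c * e:] [:e, c:]" .
  have "bnd (-1) (Fract [:b - a / c * e:] [:e, c:])" using c by (simp add: bnd_Fract)
  then show ?thesis using E by (intro exI[of _ "Fract [:b - a / c * e:] [:e, c:]"]) (simp add: algebra_simps E[symmetric])
qed

lemma nice_mob:
  fixes a b c e :: "'a::field_gcd"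
  assumes c: "c \<noteq> 0"
  shows "nice p (peval q (mobius a b c e))"
proof -
  obtain s where s: "mobius a b c e = rconst (a / c) + s" "bnd (-1) s" using mob_split[OF c] by blast
  obtain s' where "peval q (mobius a b c e) = rconst (poly q (a / c)) + s'" "bnd (-1) s'"
    using peval_split[OF s] by blast
  then show ?thesis using nice_cs by simp
qed

lemma nice_term:
  assumes g: "good_poly p dd (q::'a::field_gcd poly)"
  shows "nice p (peval q (mobius 1 0 u 1))"
proof (cases "u = 0")
  case True
  then show ?thesis using nice_poly[OF g] by (simp add: mobius_rX peval_rX)
next
  case False then show ?thesis by (rule nice_mob)
qed

lemma nice_form_pt:
  fixes t :: "'a::field_gcd"
  assumes ac: "\<forall>q::'a poly. degree q > 0 \<longrightarrow> (\<exists>x. poly q x = 0)"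
    and gf: "good_form p r d F G H J \<theta>"
  shows "nice p (rcomp (form_fun r F G H J \<theta>) (mobius t 1 1 0))"
proof -
  have det: "t * 0 - 1 * 1 \<noteq> (0::'a)" by simp
  note gd = good_formD[OF gf]
  have T: "inj_sub (mobius t 1 1 (0::'a))" using inj_sub_mobius[OF ac det] .
  have "rcomp (form_fun r F G H J \<theta>) (mobius t 1 1 0) =
    peval F (mobius t 1 1 0) + peval G (mobius 1 0 t 1) + peval H (mobius 1 0 (t - 1) 1) +
    (\<Sum>j\<in>{4..r+1}. peval (J j) (mobius 1 0 (t - \<theta> j) 1))"
    using rcomp_form[OF T det] by simp
  moreover have "nice p (peval F (mobius t 1 1 0))" by (rule nice_mob) simp
  moreover have "nice p (peval G (mobius 1 0 t 1))" by (rule nice_term[OF gd(2)])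
  moreover have "nice p (peval H (mobius 1 0 (t - 1) 1))" by (rule nice_term[OF gd(3)])
  moreover have "nice p (\<Sum>j\<in>{4..r+1}. peval (J j) (mobius 1 0 (t - \<theta> j) 1))"
    by (rule nice_sum) (auto intro: nice_term[OF gd(4)])
  ultimately show ?thesis by (simp add: nice_add)
qed

lemma inv_lin_small: "bnd (-1) (1 / (rX - rconst t) :: 'a::field_gcd poly fract)"
proof -
  have "1 / (rX - rconst t) = Fract 1 [:- t, 1:]"
    by (simp add: rX_def rconst_def One_fract_def)
  then show ?thesis by (simp add: bnd_Fract)
qed

lemma form_inf:
  fixes F G H :: "'a::field_gcd poly"
  assumes gf: "good_form p r d F G H J \<theta>"
  shows "\<exists>s. form_fun r F G H J \<theta> = Fract F 1 + s \<and> bnd (-1) s"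
proof -
  note gd = good_formD[OF gf]
  have sm: "\<exists>s. peval q (1 / (rX - rconst t)) = s \<and> bnd (-1) s" if "good_poly p dd q" for q :: "'a poly" and dd t
  proof -
    have z: "1 / (rX - rconst t) = rconst 0 + 1 / (rX - rconst t)" by simp
    obtain s' where "peval q (1 / (rX - rconst t)) = rconst (poly q 0) + s'" "bnd (-1) s'"
      using peval_split[OF z inv_lin_small] by blast
    moreover have "poly q 0 = 0" using that by (simp add: good_poly_def poly_0_coeff_0)
    ultimately show ?thesis by simp
  qed
  have s1: "bnd (-1) (peval G (1 / rX))" using sm[OF gd(2), of 0] by auto
  have s2: "bnd (-1) (peval H (1 / (rX - 1)))" using sm[OF gd(3), of 1] by auto
  have s3: "bnd (-1) (\<Sum>j\<in>{4..r+1}. peval (J j) (1 / (rX - rconst (\<theta> j))))"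
    by (rule bnd_sum) (use sm gd(4) in blast)+
  define S where "S = peval G (1 / rX) + peval H (1 / (rX - 1)) + (\<Sum>j\<in>{4..r+1}. peval (J j) (1 / (rX - rconst (\<theta> j))))"
  have "form_fun r F G H J \<theta> = Fract F 1 + S" unfolding form_fun_def peval_rX S_def by (simp add: algebra_simps)
  moreover have "bnd (-1) S" unfolding S_def by (intro bnd_add s1 s2 s3)
  ultimately show ?thesis by blast
qed


lemma ring_rearr: "(a::'b::comm_ring) + b + c = d + e - (f + g) \<Longrightarrow> a + b - d + f = e - g - c"
  by (simp add: algebra_simps)

lemma lemZ:
  fixes f h :: "'a::field_gcd poly fract"
  assumes pr: "prime p" and ch: "CHAR('a) = p" and n: "nice p f" and eq: "f = h ^ p - h"
  shows "bnd 0 h"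
proof (rule ccontr)
  assume "\<not> bnd 0 h"
  then obtain m where m: "m > 0" "exact m h" using bnd_or_exact by blast
  obtain q s where qs: "h = Fract q 1 + s" "bnd (-1) s" using poly_part by blast
  have p1: "p > 1" using pr prime_gt_1_nat by blast
  have q0: "q \<noteq> 0"
  proof
    assume "q = 0"
    then have "h = s" using qs by (simp add: Zero_fract_def[symmetric])
    then show False using exact_not_bnd[OF m(2)] qs(2) m(1) by simp
  qed
  have "exact (int (degree q)) h" unfolding qs(1)
    by (rule exact_add[OF Fract_poly_exact[OF q0] qs(2)]) simp
  then have dq: "int (degree q) = m" using m(2) exact_unique by blast
  obtain Q k s0 where f: "f = Fract Q 1 + rconst k + s0" "bnd (-1) s0" "\<forall>i. p dvd i \<longrightarrow> coeff Q i = 0"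
    using n nice_def by blast
  have hp: "h ^ p = Fract (q ^ p) 1 + s ^ p" using frob[OF pr ch] qs(1) by (simp add: Fract_power1)
  have sp: "bnd (-1) (s ^ p)"
  proof -
    have "bnd (int p * -1) (s ^ p)" using bnd_power[OF qs(2)] by simp
    then show ?thesis by (rule bnd_mono) (use p1 in simp)
  qed
  have E: "Fract Q 1 + rconst k + s0 = Fract (q ^ p) 1 + s ^ p - (Fract q 1 + s)"
    using f(1) eq hp qs(1) by simp
  have "Fract (Q + [:k:] - q ^ p + q) 1 = Fract Q 1 + rconst k - Fract (q ^ p) 1 + Fract q 1"
    by (simp only: Fract_add1 Fract_diff1 Fract_const1)
  also have "\<dots> = s ^ p - s - s0" using ring_rearr[OF E] .
  finally have "Fract (Q + [:k:] - q ^ p + q) 1 = s ^ p - s - s0" .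
  moreover have "bnd (-1) (s ^ p - s - s0)" using sp qs(2) f(2) by (intro bnd_diff)
  ultimately have P0: "Q + [:k:] - q ^ p + q = 0" using Fract_poly_small by metis
  define N where "N = p * degree q"
  have Npos: "N > 0" using p1 dq m(1) by (simp add: N_def)
  have "coeff (Q + [:k:] - q ^ p + q) N = 0" using P0 by simp
  moreover have "coeff Q N = 0" using f(3) by (simp add: N_def)
  moreover have "coeff [:k:] N = 0" using Npos by (simp add: coeff_pCons split: nat.split)
  moreover have "coeff q N = 0"
  proof (rule coeff_eq_0)
    show "degree q < N" using p1 dq m(1) by (simp add: N_def)
  qed
  moreover have "coeff (q ^ p) N = lead_coeff q ^ p"
    using degree_power_eq[OF q0, of p] lead_coeff_power[of q p] by (simp add: N_def)
  ultimately have "lead_coeff q ^ p = 0" by simp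
  then show False using q0 by simp
qed

lemma root_case:
  fixes h :: "'a::field_gcd poly fract" and t :: 'a
  assumes ac: "\<forall>q::'a poly. degree q > 0 \<longrightarrow> (\<exists>x. poly q x = 0)"
    and rt: "poly (snd (quot_of_fract h)) t = 0"
  shows "\<not> bnd 0 (rcomp h (mobius t 1 1 0))"
proof -
  define a where "a = fst (quot_of_fract h)"
  define b where "b = snd (quot_of_fract h)"
  have det: "t * 0 - 1 * 1 \<noteq> (0::'a)" by simp
  have T: "inj_sub (mobius t 1 1 (0::'a))" using inj_sub_mobius[OF ac det] .
  have b0: "b \<noteq> 0" by (simp add: b_def)
  have hab: "h = Fract a b" by (simp add: a_def b_def)
  have cop: "coprime a b" unfolding a_def b_def by (rule coprime_quot_of_fract)
  obtain b1 where b1: "b = [:- t, 1:] * b1" using rt poly_eq_0_iff_dvd unfolding b_def[symmetric] by (metis dvdE)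
  have b10: "b1 \<noteq> 0" using b0 b1 by auto
  have at: "poly a t \<noteq> 0"
  proof
    assume "poly a t = 0"
    then have "[:- t, 1:] dvd a" using poly_eq_0_iff_dvd by blast
    moreover have "[:- t, 1:] dvd b" unfolding b1 by (rule dvd_triv_left)
    ultimately have "is_unit [:- t, 1:]" using cop coprime_common_divisor by blast
    then show False by (simp add: is_unit_iff_degree)
  qed
  obtain s where s: "mobius t 1 1 0 = rconst t + s" "bnd (-1) s" using mob_split[of 1 t 1 0] by auto
  obtain s' where s': "peval a (mobius t 1 1 0) = rconst (poly a t) + s'" "bnd (-1) s'"
    using peval_split[OF s] by blast
  have ea: "exact 0 (peval a (mobius t 1 1 0))"
    unfolding s'(1) by (rule exact_add[OF exact_rconst[OF at] s'(2)]) simp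
  have l1: "peval [:- t, 1:] (mobius t 1 1 0) = mobius 0 1 1 (0::'a)"
    using mobius_minus_const[of 1 0 t 1 t] by (simp add: peval_pCons rconst_uminus)
  have "exact 1 (mobius 1 0 0 (1::'a))" by (rule mobius_exact) simp
  then have "exact (- 1) (1 / mobius 1 0 0 (1::'a))" using exact_inverse by (simp add: divide_inverse)
  then have e1: "exact (- 1) (peval [:- t, 1:] (mobius t 1 1 0))" unfolding l1 by (simp add: mobius_inverse)
  have bb1: "bnd 0 (peval b1 (mobius t 1 1 0))" by (intro peval_bnd mobius_bnd) simp
  have "bnd (-1 + 0) (peval b (mobius t 1 1 0))"
    unfolding b1 peval_mult by (rule bnd_mult[OF exact_bnd[OF e1 order_refl] bb1])
  moreover have "peval b (mobius t 1 1 0) \<noteq> 0" using T b0 by (simp add: inj_sub_def)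
  ultimately obtain k where k: "k \<le> -1" "exact k (peval b (mobius t 1 1 0))"
    by (auto simp: bnd_def exact_def)
  have "exact (0 - k) (rcomp h (mobius t 1 1 0))"
    unfolding hab rcomp_Fract[OF T b0] by (rule exact_divide[OF ea k(2)])
  then show ?thesis using k(1) exact_not_bnd by fastforce
qed


lemma ring_rearr2: "(A::'b::comm_ring) + s1 - l * (B + s2) = C \<Longrightarrow> A - l * B - C = l * s2 - s1"
  by (simp add: algebra_simps)

lemma nice_form_inf:
  assumes gf: "good_form p r d F G H J \<theta>"
  shows "nice p (form_fun r F G H J \<theta>)"
proof -
  obtain s where s: "form_fun r F G H J \<theta> = Fract F 1 + s" "bnd (-1) s" using form_inf[OF gf] by blast
  have "nice p (Fract F 1 + (rconst 0 + s))"
    by (intro nice_add nice_poly[OF good_formD(1)[OF gf]] nice_cs s(2))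
  then show ?thesis using s(1) by simp
qed

theorem theorem6p6:
  fixes p r :: nat and d :: "nat \<Rightarrow> nat"
    and F G H F' G' H' :: "'a::field_gcd poly" and J J' :: "nat \<Rightarrow> 'a poly"
    and \<theta> \<theta>' :: "nat \<Rightarrow> 'a" and \<alpha> \<beta> \<gamma> \<delta> lam :: 'a and h :: "'a poly fract"
  assumes "prime p" and "odd p"
    and "is_alg_closure_Fp p TYPE('a)"
    and "good_form p r d F G H J \<theta>"
    and "good_form p r d F' G' H' J' \<theta>'"
    and "d 1 > d 2" and "d 2 > d 3"
    and "{d 1, d 2, d 3} \<inter> d ` {4..r+1} = {}"
    and "transforms p \<alpha> \<beta> \<gamma> \<delta> lam h (form_fun r F G H J \<theta>) (form_fun r F' G' H' J' \<theta>')"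
  shows "mobius \<alpha> \<beta> \<gamma> \<delta> = rX \<and> (\<exists>c::'a. c ^ p = c \<and> h = rconst c)"
proof -
  note pr = assms(1) and gf = assms(4) and gf' = assms(5)
  have ch: "CHAR('a) = p" and ac: "\<forall>q::'a poly. degree q > 0 \<longrightarrow> (\<exists>x. poly q x = 0)"
    using assms(3) by (auto simp: is_alg_closure_Fp_def)
  have det: "\<alpha> * \<delta> - \<beta> * \<gamma> \<noteq> 0" and lam: "lam \<noteq> 0"
    and eq: "rcomp (form_fun r F G H J \<theta>) (mobius \<alpha> \<beta> \<gamma> \<delta>)
             = rconst lam * form_fun r F' G' H' J' \<theta>' + h ^ p - h"
    using assms(9) by (auto simp: transforms_def)
  have p1: "p > 1" using pr prime_gt_1_nat by blast
  have abc: "\<gamma> = 0 \<and> \<beta> = 0 \<and> \<delta> = \<alpha>"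
    using part2[OF ac gf gf' assms(6) assms(7) assms(8) p1 det lam eq] .
  then have a0: "\<alpha> \<noteq> 0" using det by auto
  have M: "mobius \<alpha> \<beta> \<gamma> \<delta> = rX"
    using abc a0 by (simp add: mobius_def)
  define \<Phi> where "\<Phi> = form_fun r F G H J \<theta>"
  define \<Phi>' where "\<Phi>' = form_fun r F' G' H' J' \<theta>'"
  have eq2: "\<Phi> - rconst lam * \<Phi>' = h ^ p - h"
    using eq unfolding M rcomp_id \<Phi>_def[symmetric] \<Phi>'_def[symmetric] by (simp add: algebra_simps)
  define a where "a = fst (quot_of_fract h)"
  define b where "b = snd (quot_of_fract h)"
  have b0: "b \<noteq> 0" by (simp add: b_def)
  have hab: "h = Fract a b" by (simp add: a_def b_def)
  have db: "degree b = 0"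
  proof (rule ccontr)
    assume "degree b \<noteq> 0"
    then obtain t where t: "poly b t = 0" using ac by auto
    have det1: "t * 0 - 1 * 1 \<noteq> (0::'a)" by simp
    have T: "inj_sub (mobius t 1 1 (0::'a))" using inj_sub_mobius[OF ac det1] .
    have "rcomp \<Phi> (mobius t 1 1 0) - rconst lam * rcomp \<Phi>' (mobius t 1 1 0)
        = rcomp h (mobius t 1 1 0) ^ p - rcomp h (mobius t 1 1 0)"
      using arg_cong[OF eq2, of "\<lambda>x. rcomp x (mobius t 1 1 0)"]
      by (simp add: rcomp_diff[OF T] rcomp_mult[OF T] rcomp_rconst[OF T] rcomp_power[OF T])
    moreover have "nice p (rcomp \<Phi> (mobius t 1 1 0) - rconst lam * rcomp \<Phi>' (mobius t 1 1 0))"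
      unfolding \<Phi>_def \<Phi>'_def by (intro nice_diff nice_form_pt[OF ac gf] nice_form_pt[OF ac gf'])
    ultimately have "bnd 0 (rcomp h (mobius t 1 1 0))" using lemZ[OF pr ch] by metis
    moreover have "\<not> bnd 0 (rcomp h (mobius t 1 1 0))"
      by (rule root_case[OF ac]) (use t in \<open>simp add: b_def\<close>)
    ultimately show False by simp
  qed
  have "nice p (\<Phi> - rconst lam * \<Phi>')"
    unfolding \<Phi>_def \<Phi>'_def by (intro nice_diff nice_form_inf[OF gf] nice_form_inf[OF gf'])
  then have hb: "bnd 0 h" using lemZ[OF pr ch] eq2 by metis
  then have da: "degree a = 0" using b0 db hab by (auto simp: bnd_Fract)
  obtain a0 where a0': "a = [:a0:]" using da by (metis degree_eq_zeroE)
  obtain b0' where b0': "b = [:b0':]" using db by (metis degree_eq_zeroE)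
  have bz: "b0' \<noteq> 0" using b0 b0' by simp
  define c where "c = a0 / b0'"
  have hc: "h = rconst c" unfolding hab a0' b0' c_def rconst_def using bz by (simp add: eq_fract)
  obtain s1 where s1: "\<Phi> = Fract F 1 + s1" "bnd (-1) s1" using form_inf[OF gf] \<Phi>_def by blast
  obtain s2 where s2: "\<Phi>' = Fract F' 1 + s2" "bnd (-1) s2" using form_inf[OF gf'] \<Phi>'_def by blast
  have "Fract F 1 + s1 - rconst lam * (Fract F' 1 + s2) = rconst (c ^ p - c)"
    using eq2 s1(1) s2(1) hc by (simp add: rconst_diff rconst_power)
  then have "Fract F 1 - rconst lam * Fract F' 1 - rconst (c ^ p - c) = rconst lam * s2 - s1"
    by (rule ring_rearr2)
  then have "Fract (F - smult lam F' - [:c ^ p - c:]) 1 = rconst lam * s2 - s1"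
    by (simp only: Fract_diff1 Fract_smult1 Fract_const1)
  moreover have "bnd (-1) (rconst lam * s2 - s1)"
    using bnd_mult[OF bnd_rconst s2(2), of lam] s1(2) by (intro bnd_diff) simp_all
  ultimately have "F - smult lam F' - [:c ^ p - c:] = 0" using Fract_poly_small by metis
  then have "coeff (F - smult lam F' - [:c ^ p - c:]) 0 = 0" by simp
  moreover have "coeff F 0 = 0" "coeff F' 0 = 0"
    using good_formD(1)[OF gf] good_formD(1)[OF gf'] by (auto simp: good_poly_def)
  ultimately have "c ^ p = c" by simp
  then show ?thesis using M hc by blast
qed

end
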